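(* Let $(K,Q)$ be an admissible pair for the control system $\dot x(t)=F(x(t),\omega(t))$, $\omega\in\mathcal{U}$, on $M$. Then for every $\tau>0$ and every $f\in C(U,\mathbb{R})$, \[ P_{inv}(f,K,Q)=\limsup_{n\rightarrow\infty}\frac{1}{n\tau}\log a_{n\tau}(f,K,Q). \]
   Context: $M$ is a smooth (connected, second countable, Hausdorff, $C^\infty$) manifold. A control system on $M$ is $\dot x(t)=F(x(t),\omega(t))$, where $U\subset\mathbb{R}^m$ is compact (the control range), $\mathcal{U}$ is the set of measurable $\omega:\mathbb{R}\to\mathbb{R}^m$ with $\omega(t)\in U$ a.e., $F:M\times\mathbb{R}^m\to TM$ is $C^1$ with $F(\cdot,u)$ a smooth vector field for each $u\in U$, and for each $x\in M,\omega\in\mathcal{U}$ there is a unique solution $\varphi(t,x,\omega)$ defined for all $t\in\mathbb{R}$. A pair $(K,Q)$ of nonempty subsets of $M$ is admissible if $K$ is compact and for each $x\in K$ there is $\omega\in\mathcal{U}$ with $\varphi(t,x,\omega)\in Q$ for all $t\ge 0$. For $\tau>0$, a set $\mathcal{S}\subset\mathcal{U}$ is $(\tau,K,Q)$-spanning if for every $x\in K$ there is $\omega\in\mathcal{S}$ with $\varphi(t,x,\omega)\in Q$ for all $t\in[0,\tau]$. For $f\in C(U,\mathbb{R})$ (a potential) let $(S_\tau f)(\omega)=\int_0^\tau f(\omega(t))\,dt$, $a_\tau(f,K,Q)=\inf\{\sum_{\omega\in\mathcal{S}}e^{(S_\tau f)(\omega)}:\mathcal{S}\text{ is }(\tau,K,Q)\text{-spanning}\}$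 (possibly $+\infty$), and the invariance pressure $P_{inv}(f,K,Q)=\limsup_{\tau\to\infty}\frac{1}{\tau}\log a_\tau(f,K,Q)$. *)

theory Defs
  imports "HOL-Analysis.Analysis"
begin

text \<open>Abstract control system: the state space is a type 'x, controls take values in
  real^'m, and phi t x w is the solution at time t starting in x under control w.\<close>

definition admissible_controls :: "(real^'m) set \<Rightarrow> (real \<Rightarrow> real^'m) set" where
  "admissible_controls U =
     {w. w \<in> borel_measurable lebesgue \<and> (AE t in lebesgue. w t \<in> U)}"

definition admissible_pair ::
  "(real \<Rightarrow> 'x \<Rightarrow> (real \<Rightarrow> real^'m) \<Rightarrow> 'x) \<Rightarrow> (real^'m) set \<Rightarrow> 'x::topological_space set \<Rightarrow> 'x set \<Rightarrow> bool" where
  "admissible_pair phi U K Q \<longleftrightarrow> K \<noteq> {} \<and> Q \<noteq> {} \<and> compact K \<and>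
     (\<forall>x\<in>K. \<exists>w\<in>admissible_controls U. \<forall>t\<ge>0. phi t x w \<in> Q)"

definition spanning ::
  "(real \<Rightarrow> 'x \<Rightarrow> (real \<Rightarrow> real^'m) \<Rightarrow> 'x) \<Rightarrow> (real^'m) set \<Rightarrow> real \<Rightarrow> 'x set \<Rightarrow> 'x set
    \<Rightarrow> (real \<Rightarrow> real^'m) set \<Rightarrow> bool" where
  "spanning phi U \<tau> K Q S \<longleftrightarrow> S \<subseteq> admissible_controls U \<and>
     (\<forall>x\<in>K. \<exists>w\<in>S. \<forall>t\<in>{0..\<tau>}. phi t x w \<in> Q)"

definition birkhoff_sum :: "(real^'m \<Rightarrow> real) \<Rightarrow> real \<Rightarrow> (real \<Rightarrow> real^'m) \<Rightarrow> real" where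
  "birkhoff_sum f \<tau> w = integral {0..\<tau>} (\<lambda>t. f (w t))"

definition a_inv ::
  "(real \<Rightarrow> 'x \<Rightarrow> (real \<Rightarrow> real^'m) \<Rightarrow> 'x) \<Rightarrow> (real^'m) set \<Rightarrow> (real^'m \<Rightarrow> real) \<Rightarrow> real
    \<Rightarrow> 'x set \<Rightarrow> 'x set \<Rightarrow> ennreal" where
  "a_inv phi U f \<tau> K Q =
     (INF S\<in>{S. spanning phi U \<tau> K Q S}. (\<Sum>\<^sub>\<infinity>w\<in>S. ennreal (exp (birkhoff_sum f \<tau> w))))"

definition elog :: "ennreal \<Rightarrow> ereal" where
  "elog a = (if a = \<infinity> then \<infinity> else if a = 0 then -\<infinity> else ereal (ln (enn2real a)))"

definition P_inv ::
  "(real \<Rightarrow> 'x \<Rightarrow> (real \<Rightarrow> real^'m) \<Rightarrow> 'x) \<Rightarrow> (real^'m) set \<Rightarrow> (real^'m \<Rightarrow> real)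
    \<Rightarrow> 'x set \<Rightarrow> 'x set \<Rightarrow> ereal" where
  "P_inv phi U f K Q = Limsup at_top (\<lambda>\<tau>::real. ereal (1 / \<tau>) * elog (a_inv phi U f \<tau> K Q))"

end

theory Submission
  imports Defs
begin
lemma bs_bound:
  fixes w :: "real \<Rightarrow> real^'m" and f :: "real^'m \<Rightarrow> real"
  assumes U: "compact U" and fc: "continuous_on U f" and C: "\<And>u. u \<in> U \<Longrightarrow> \<bar>f u\<bar> \<le> C" "C \<ge> 0"
    and w: "w \<in> admissible_controls U" and ts: "0 \<le> t" "t \<le> s"
  shows "birkhoff_sum f t w \<le> birkhoff_sum f s w + C * (s - t)"
proof -
  have wm: "w \<in> borel_measurable lebesgue" and ae: "AE x in lebesgue. w x \<in> U"
    using w by (auto simp: admissible_controls_def)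
  from ae obtain N where N: "{x \<in> space lebesgue. w x \<notin> U} \<subseteq> N" "emeasure lebesgue N = 0" "N \<in> sets lebesgue"
    by (rule AE_E)
  have negN: "negligible N" using N by (simp add: negligible_iff_null_sets null_sets_def)
  define h where "h x = indicator U (w x) *\<^sub>R f (w x)" for x
  have Ub: "U \<in> sets borel" using U by (simp add: compact_imp_closed)
  have hm: "h \<in> borel_measurable lebesgue"
    unfolding h_def using measurable_compose[OF wm borel_measurable_continuous_on_indicator[OF Ub fc]] by simp
  have hb: "\<bar>h x\<bar> \<le> C" for x using C by (auto simp: h_def indicator_def)
  have hb': "- C \<le> h x" for x using hb[of x] by linarith
  have hint: "h integrable_on {0..s}"
    by (rule measurable_bounded_by_integrable_imp_integrable_real[where g="\<lambda>_. C"])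
       (use hm hb in \<open>auto intro: measurable_restrict_space1\<close>)
  have eq: "f (w x) = h x" if "x \<in> {0..s} - N" for x using that N(1) by (auto simp: h_def indicator_def)
  have fint: "(\<lambda>x. f (w x)) integrable_on {0..s}"
    by (rule integrable_spike[OF hint negN]) (use eq in auto)
  have "integral {0..t} (\<lambda>x. f (w x)) + integral {t..s} (\<lambda>x. f (w x)) = integral {0..s} (\<lambda>x. f (w x))"
    by (rule Henstock_Kurzweil_Integration.integral_combine[OF ts fint])
  moreover have "integral {t..s} (\<lambda>x. f (w x)) = integral {t..s} h"
    by (rule integral_spike[OF negN]) (use N(1) in \<open>auto simp: h_def indicator_def\<close>)
  moreover have "integral {t..s} h \<ge> integral {t..s} (\<lambda>_. - C)"
    by (rule integral_le) (use hint ts hb' in \<open>auto intro: integrable_subinterval_real\<close>)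
  ultimately show ?thesis using ts unfolding birkhoff_sum_def by (auto simp: algebra_simps)
qed

lemma infsum_cmult_ennreal: "(\<Sum>\<^sub>\<infinity>x\<in>A. c * g x) = c * (\<Sum>\<^sub>\<infinity>x\<in>A. (g x :: ennreal))"
proof -
  have "(\<Sum>\<^sub>\<infinity>x\<in>A. c * g x) = (SUP F\<in>{F. finite F \<and> F\<subseteq>A}. sum (\<lambda>x. c * g x) F)"
    by (rule nonneg_infsum_complete) simp
  also have "\<dots> = (SUP F\<in>{F. finite F \<and> F\<subseteq>A}. c * sum g F)"
    by (simp add: sum_distrib_left)
  also have "\<dots> = c * (SUP F\<in>{F. finite F \<and> F\<subseteq>A}. sum g F)"
    by (simp add: SUP_mult_left_ennreal)
  also have "(SUP F\<in>{F. finite F \<and> F\<subseteq>A}. sum g F) = (\<Sum>\<^sub>\<infinity>x\<in>A. g x)"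
    by (rule nonneg_infsum_complete[symmetric]) simp
  finally show ?thesis .
qed

lemma a_bound:
  fixes f :: "real^'m \<Rightarrow> real"
  assumes U: "compact U" and fc: "continuous_on U f" and C: "\<And>u. u \<in> U \<Longrightarrow> \<bar>f u\<bar> \<le> C" "C \<ge> 0"
    and ts: "0 \<le> t" "t \<le> s"
  shows "a_inv phi U f t K Q \<le> ennreal (exp (C * (s - t))) * a_inv phi U f s K Q"
proof -
  define c where "c = ennreal (exp (C * (s - t)))"
  define d where "d = ennreal (exp (- (C * (s - t))))"
  have dc: "d * c = 1" unfolding c_def d_def
    by (simp add: ennreal_mult''[symmetric] exp_minus_inverse del: ennreal_1) (simp add: mult_exp_exp)
  have key: "a_inv phi U f t K Q \<le> c * (\<Sum>\<^sub>\<infinity>w\<in>S. ennreal (exp (birkhoff_sum f s w)))"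
    if sp: "spanning phi U s K Q S" for S
  proof -
    have spt: "spanning phi U t K Q S" using sp ts unfolding spanning_def by fastforce
    have "a_inv phi U f t K Q \<le> (\<Sum>\<^sub>\<infinity>w\<in>S. ennreal (exp (birkhoff_sum f t w)))"
      unfolding a_inv_def by (rule INF_lower) (use spt in simp)
    also have "\<dots> \<le> (\<Sum>\<^sub>\<infinity>w\<in>S. c * ennreal (exp (birkhoff_sum f s w)))"
    proof (rule infsum_mono)
      fix w assume "w \<in> S"
      hence "w \<in> admissible_controls U" using sp by (auto simp: spanning_def)
      hence "birkhoff_sum f t w \<le> birkhoff_sum f s w + C * (s - t)"
        using bs_bound[OF U fc C(1) C(2) _ ts] by blast
      hence "exp (birkhoff_sum f t w) \<le> exp (C * (s - t)) * exp (birkhoff_sum f s w)"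
        by (simp add: mult_exp_exp add.commute)
      thus "ennreal (exp (birkhoff_sum f t w)) \<le> c * ennreal (exp (birkhoff_sum f s w))"
        unfolding c_def by (simp add: ennreal_mult''[symmetric] ennreal_leI)
    qed (rule nonneg_summable_on_complete, simp)+
    also have "\<dots> = c * (\<Sum>\<^sub>\<infinity>w\<in>S. ennreal (exp (birkhoff_sum f s w)))"
      by (rule infsum_cmult_ennreal)
    finally show ?thesis .
  qed
  have "d * a_inv phi U f t K Q \<le> a_inv phi U f s K Q"
    unfolding a_inv_def[of phi U f s]
  proof (rule INF_greatest)
    fix S assume "S \<in> {S. spanning phi U s K Q S}"
    hence "d * a_inv phi U f t K Q \<le> d * (c * (\<Sum>\<^sub>\<infinity>w\<in>S. ennreal (exp (birkhoff_sum f s w))))"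
      using key[of S] by (intro mult_left_mono) auto
    thus "d * a_inv phi U f t K Q \<le> (\<Sum>\<^sub>\<infinity>w\<in>S. ennreal (exp (birkhoff_sum f s w)))"
      by (metis dc mult.assoc mult_1)
  qed
  hence "c * (d * a_inv phi U f t K Q) \<le> c * a_inv phi U f s K Q" by (rule mult_left_mono) simp
  moreover have "c * (d * a_inv phi U f t K Q) = a_inv phi U f t K Q"
    by (metis dc mult.assoc mult.commute mult_1)
  ultimately show ?thesis unfolding c_def by simp
qed

lemma elog_mono: "a \<le> b \<Longrightarrow> elog a \<le> elog b"
  unfolding elog_def
  by (cases a; cases b) (auto simp: ennreal_le_iff2 top_unique)

lemma elog_mult: "elog (ennreal (exp x) * b) = ereal x + elog b"
proof (cases b)
  case (real r)
  show ?thesis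
  proof (cases "r = 0")
    case True thus ?thesis using real by (simp add: elog_def)
  next
    case False
    hence r: "r > 0" using real by simp
    have "ennreal (exp x) * b = ennreal (exp x * r)" using real r by (simp add: ennreal_mult'')
    thus ?thesis using real r by (simp add: elog_def ln_mult)
  qed
next
  case top
  thus ?thesis by (simp add: elog_def ennreal_mult_top)
qed

lemma key_ineq:
  fixes Et Es :: ereal
  assumes "Et \<le> ereal c + Es" "0 < t" "t \<le> s"
  shows "ereal (1/t) * Et \<le> ereal (s/t) * (ereal (1/s) * Es) + ereal (c/t)"
  using assms
proof (cases Et; cases Es)
  fix a b assume ab: "Et = ereal a" "Es = ereal b"
  hence "a \<le> c + b" using assms by simp
  hence "a / t \<le> c / t + b / t" using assms by (simp add: divide_right_mono add_divide_distrib[symmetric])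
  thus ?thesis using ab assms by simp
qed auto

lemma Limsup_filter_mono: "F \<le> G \<Longrightarrow> Limsup F (f :: _ \<Rightarrow> 'a::complete_linorder) \<le> Limsup G f"
  unfolding Limsup_def by (rule INF_superset_mono) (auto simp: le_filter_def)

lemma ereal_le_by_reals:
  fixes x y :: ereal
  assumes "\<And>B. x < ereal B \<Longrightarrow> y \<le> ereal B"
  shows "y \<le> x"
proof (rule ccontr)
  assume "\<not> y \<le> x"
  hence "x < y" by simp
  then obtain r where "x < ereal r" "ereal r < y" using ereal_dense2 by blast
  thus False using assms by fastforce
qed

theorem proposition2p9:
  fixes phi :: "real \<Rightarrow> 'x::{t2_space, second_countable_topology} \<Rightarrow> (real \<Rightarrow> real^'m) \<Rightarrow> 'x"
    and U :: "(real^'m) set" and f :: "real^'m \<Rightarrow> real" and K Q :: "'x set" and \<tau> :: real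
  assumes "compact U"
    and "continuous_on U f"
    and "admissible_pair phi U K Q"
    and "\<tau> > 0"
  shows "P_inv phi U f K Q =
    limsup (\<lambda>n::nat. ereal (1 / (real n * \<tau>)) * elog (a_inv phi U f (real n * \<tau>) K Q))"
proof -
  note U = assms(1) and fc = assms(2) and tau = assms(4)
  define E where "E t = elog (a_inv phi U f t K Q)" for t
  define G where "G t = ereal (1 / t) * E t" for t
  have bdd: "bounded (f ` U)" using compact_continuous_image[OF fc U] compact_imp_bounded by blast
  then obtain C where C: "\<And>u. u \<in> U \<Longrightarrow> \<bar>f u\<bar> \<le> C" "C > 0"
    by (auto simp: bounded_pos)
  have Eb: "E t \<le> ereal (C * \<tau>) + E s" if "0 \<le> t" "t \<le> s" "s \<le> t + \<tau>" for t s
  proof -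
    have "E t \<le> ereal (C * (s - t)) + E s"
      unfolding E_def using elog_mono[OF a_bound[OF U fc C(1) less_imp_le[OF C(2)] that(1,2)]]
      by (simp add: elog_mult)
    also have "\<dots> \<le> ereal (C * \<tau>) + E s"
      by (rule add_right_mono) (use that C in simp)
    finally show ?thesis .
  qed
  have Gb: "G t \<le> ereal (s/t) * G s + ereal (C * \<tau> / t)" if "0 < t" "t \<le> s" "s \<le> t + \<tau>" for t s
    unfolding G_def by (rule key_ineq) (use that Eb in auto)
  have lhs: "P_inv phi U f K Q = Limsup at_top G"
    unfolding P_inv_def G_def E_def ..
  have rhs: "limsup (\<lambda>n::nat. ereal (1 / (real n * \<tau>)) * elog (a_inv phi U f (real n * \<tau>) K Q))
      = limsup (\<lambda>n. G (real n * \<tau>))"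
    unfolding G_def E_def ..
  define L where "L = limsup (\<lambda>n. G (real n * \<tau>))"
  have ge: "L \<le> Limsup at_top G"
  proof -
    have "filterlim (\<lambda>n::nat. real n * \<tau>) at_top sequentially"
      using tau by (intro filterlim_at_top_mult_tendsto_pos[OF tendsto_const] filterlim_real_sequentially) auto
    hence "filtermap (\<lambda>n::nat. real n * \<tau>) sequentially \<le> at_top" by (simp add: filterlim_def)
    hence "Limsup (filtermap (\<lambda>n::nat. real n * \<tau>) sequentially) G \<le> Limsup at_top G"
      by (rule Limsup_filter_mono)
    moreover have "L \<le> Limsup (filtermap (\<lambda>n::nat. real n * \<tau>) sequentially) G"
      unfolding L_def by (rule Limsup_filtermap_ge)
    ultimately show ?thesis by simp
  qed
  have le: "Limsup at_top G \<le> L"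
  proof (rule ereal_le_by_reals)
    fix B assume LB: "L < ereal B"
    show "Limsup at_top G \<le> ereal B"
    proof (rule ereal_le_by_reals)
      fix B' assume BB: "ereal B < ereal B'"
      define \<epsilon> where "\<epsilon> = B' - B"
      have eps: "\<epsilon> > 0" using BB by (simp add: \<epsilon>_def)
      from Limsup_lessD[OF LB[unfolded L_def]] obtain N where N: "\<And>n. n \<ge> N \<Longrightarrow> G (real n * \<tau>) < ereal B"
        by (auto simp: eventually_sequentially)
      define T where "T = max (real N * \<tau>) (max \<tau> ((\<bar>B\<bar> + C) * \<tau> / \<epsilon>))"
      have "eventually (\<lambda>t. G t \<le> ereal B') at_top"
        unfolding eventually_at_top_linorder
      proof (intro exI allI impI)
        fix t assume tT: "t \<ge> T"
        have t0: "t > 0" using tT tau by (simp add: T_def)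
        define n where "n = nat \<lceil>t / \<tau>\<rceil>"
        define s where "s = real n * \<tau>"
        have "t / \<tau> \<le> real n" unfolding n_def by linarith
        hence ts: "t \<le> s" using tau unfolding s_def by (simp add: field_simps)
        have pos: "0 < t / \<tau>" using t0 tau by simp
        hence "real n = of_int \<lceil>t / \<tau>\<rceil>" unfolding n_def by simp
        hence "real n < t / \<tau> + 1" by linarith
        hence st: "s \<le> t + \<tau>" using tau unfolding s_def by (simp add: field_simps)
        have "real N * \<tau> \<le> t" using tT by (simp add: T_def)
        hence "real N \<le> t / \<tau>" using tau by (simp add: field_simps)
        hence "N \<le> n" unfolding n_def by linarith
        hence GsB: "G s < ereal B" using N unfolding s_def by blast
        have Gt: "G t \<le> ereal (s/t) * G s + ereal (C * \<tau> / t)" by (rule Gb[OF t0 ts st])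
        have bnd: "(\<bar>B\<bar> + C) * \<tau> / t \<le> \<epsilon>"
        proof -
          have "(\<bar>B\<bar> + C) * \<tau> / \<epsilon> \<le> t" using tT by (simp add: T_def)
          thus ?thesis using eps t0 by (simp add: field_simps)
        qed
        show "G t \<le> ereal B'"
        proof (cases "G s")
          case (real g)
          have "s / t * g \<le> s / t * B" using GsB real ts t0 by (intro mult_left_mono) auto
          also have "\<dots> \<le> B + \<bar>B\<bar> * \<tau> / t"
          proof -
            have "B * s \<le> \<bar>B\<bar> * \<tau> + B * t"
            proof (cases "B \<ge> 0")
              case True
              hence "B * s \<le> B * (\<tau> + t)" using st by (intro mult_left_mono) auto
              thus ?thesis using True by (simp add: algebra_simps)
            next
              case False
              hence "B * s \<le> B * t" using ts by (intro mult_left_mono_neg) auto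
              moreover have "B * \<tau> \<le> 0" using False tau by (simp add: mult_nonpos_nonneg)
              moreover have "\<bar>B\<bar> * \<tau> = - (B * \<tau>)" using False by simp
              ultimately show ?thesis by linarith
            qed
            thus ?thesis using t0 tau by (simp add: field_simps)
          qed
          finally have "s / t * g + C * \<tau> / t \<le> B + \<epsilon>" using bnd t0
            by (simp add: field_simps)
          thus ?thesis using Gt real by (simp add: \<epsilon>_def) (meson ereal_less_eq(3) order_trans)
        next
          case PInf thus ?thesis using GsB by simp
        next
          case MInf
          have "ereal (s/t) * G s = - \<infinity>" using MInf ts t0 by simp
          hence "G t \<le> - \<infinity> + ereal (C * \<tau> / t)" using Gt by metis
          thus ?thesis by simp
        qed
      qed
      thus "Limsup at_top G \<le> ereal B'" by (rule Limsup_bounded)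
    qed
  qed
  show ?thesis using ge le lhs rhs L_def by simp
qed
end
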